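(* Let $\nu\in\mathcal P_s$ with $\nu(\{0\})=0$, let $t\ge a>0$ with $\nu(\{a\})=\nu(\{t\})=0$, and let $y\in\mathbb R$ with $|y|\ne a$. Then $$\int_{(-\infty,a]}\Psi\big(\tfrac xt\big)(\delta_y\vartriangle_\alpha\nu)(dx)=\tfrac12\Psi\big(\tfrac ya\big)M(a,t)+\tfrac12G(a)\Psi\big(\tfrac at\big)\mathbf 1_{\{|y|<a\}}+\tfrac12\Psi\big(\tfrac yt\big)G(t),$$ where $M(a,t)=H(a)\Psi\big(\tfrac at\big)+\big(1-\Psi\big(\tfrac at\big)\big)G(a)$.
   Context: Fix $\alpha>0$. $\mathcal P_s$ is the set of symmetric Borel probability measures on $\mathbb R$. For $x\in\mathbb R$, $\widetilde\delta_x=\frac12(\delta_x+\delta_{-x})$. For a probability measure $\lambda=\mathcal L(X)$ and $c>0$, $T_c\lambda=\mathcal L(cX)$, and $T_0\lambda=\delta_0$. $\widetilde\pi_{2\alpha}$ is the symmetric Pareto probability measure with density $\alpha|y|^{-2\alpha-1}\mathbf 1_{\{|y|\ge1\}}$. The Kendall convolution $\vartriangle_\alpha$ on $\mathcal P_s$ is defined by $\widetilde\delta_x\vartriangle_\alpha\widetilde\delta_y=T_M\big(\varrho^\alpha\widetilde\pi_{2\alpha}+(1-\varrho^\alpha)\widetilde\delta_1\big)$ where $M=\max(|x|,|y|)$, $m=\min(|x|,|y|)$, $\varrho=m/M$ (and $\varrho=0$ if $M=0$), extended by $(\nu_1\vartriangle_\alpha\nu_2)(A)=\int\int(\widetilde\delta_x\vartriangle_\alpha\widetilde\delta_y)(A)\,\nu_1(dx)\nu_2(dy)$.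 For $x\in\mathbb R$ and $\mu\in\mathcal P_s$ we write $\delta_x\vartriangle_\alpha\mu:=\widetilde\delta_x\vartriangle_\alpha\mu$. $\Psi(t)=(1-|t|^\alpha)_+$. For the measure $\nu$: $F(t)=\nu((-\infty,t])$, $G(t)=\int_{\mathbb R}\Psi(x/t)\,\nu(dx)$ for $t\neq0$, and for $t>0$, $H(t)=2F(t)-1-G(t)=t^{-\alpha}\int_{[-t,t]}|x|^\alpha\nu(dx)$. *)

theory Defs
  imports "HOL-Probability.Probability"
begin

definition sym_prob :: "real measure \<Rightarrow> bool" where
  "sym_prob \<nu> \<longleftrightarrow> prob_space \<nu> \<and> sets \<nu> = sets borel \<and> distr \<nu> borel uminus = \<nu>"

definition sdelta :: "real \<Rightarrow> real measure" where
  "sdelta x = measure_of UNIV (sets borel)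
     (\<lambda>A. ennreal (1/2) * indicator A x + ennreal (1/2) * indicator A (- x))"

definition dil :: "real \<Rightarrow> real measure \<Rightarrow> real measure" where
  "dil c L = (if c = 0 then return borel 0 else distr L borel (\<lambda>z. c * z))"

definition spareto :: "real \<Rightarrow> real measure" where
  "spareto \<alpha> = density lborel
     (\<lambda>y. ennreal (\<alpha> * \<bar>y\<bar> powr (- 2 * \<alpha> - 1) * indicator {y. \<bar>y\<bar> \<ge> 1} y))"

definition kmix :: "real \<Rightarrow> real \<Rightarrow> real measure" where
  "kmix \<alpha> r = measure_of UNIV (sets borel)
     (\<lambda>A. ennreal (r powr \<alpha>) * emeasure (spareto \<alpha>) A
          + ennreal (1 - r powr \<alpha>) * emeasure (sdelta 1) A)"

text \<open>Kendall convolution of two symmetrised Dirac measures.\<close>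
definition kdd :: "real \<Rightarrow> real \<Rightarrow> real \<Rightarrow> real measure" where
  "kdd \<alpha> x y = (let M = max \<bar>x\<bar> \<bar>y\<bar>; m = min \<bar>x\<bar> \<bar>y\<bar>;
                    \<rho> = (if M = 0 then 0 else m / M)
                in dil M (kmix \<alpha> \<rho>))"

definition kconv :: "real \<Rightarrow> real measure \<Rightarrow> real measure \<Rightarrow> real measure" where
  "kconv \<alpha> \<nu>1 \<nu>2 = measure_of UNIV (sets borel)
     (\<lambda>A. \<integral>\<^sup>+ x. \<integral>\<^sup>+ y. emeasure (kdd \<alpha> x y) A \<partial>\<nu>2 \<partial>\<nu>1)"

definition Psi :: "real \<Rightarrow> real \<Rightarrow> real" where
  "Psi \<alpha> s = max 0 (1 - \<bar>s\<bar> powr \<alpha>)"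

definition cdfF :: "real measure \<Rightarrow> real \<Rightarrow> real" where
  "cdfF \<nu> s = measure \<nu> {..s}"

definition Gf :: "real \<Rightarrow> real measure \<Rightarrow> real \<Rightarrow> real" where
  "Gf \<alpha> \<nu> s = (\<integral>x. Psi \<alpha> (x / s) \<partial>\<nu>)"

definition Hf :: "real \<Rightarrow> real measure \<Rightarrow> real \<Rightarrow> real" where
  "Hf \<alpha> \<nu> s = 2 * cdfF \<nu> s - 1 - Gf \<alpha> \<nu> s"

definition Mf :: "real \<Rightarrow> real measure \<Rightarrow> real \<Rightarrow> real \<Rightarrow> real" where
  "Mf \<alpha> \<nu> a t = Hf \<alpha> \<nu> a * Psi \<alpha> (a / t) + (1 - Psi \<alpha> (a / t)) * Gf \<alpha> \<nu> a"

end

theory Submission imports Defs begin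

lemma measure_of_borel_eq:
  fixes B :: "real measure"
  assumes sB: "sets B = sets borel" and eq: "\<And>A. A \<in> sets borel \<Longrightarrow> \<mu> A = emeasure B A"
  shows "measure_of UNIV (sets borel) \<mu> = B"
proof -
  have "measure_of UNIV (sets borel) \<mu> = measure_of UNIV (sets borel) (emeasure B)"
    by (rule measure_of_eq) (auto simp: eq sets.sigma_sets_eq[of borel, simplified])
  also have "\<dots> = measure_of (space B) (sets B) (emeasure B)"
    using sB sets_eq_imp_space_eq[OF sB] by simp
  finally show ?thesis by (simp add: measure_of_of_measure)
qed

definition "SD x = distr (measure_pmf (bernoulli_pmf (1/2))) borel (\<lambda>b. if b then x else -x)"

lemma nn_SD: "g \<in> borel_measurable borel \<Longrightarrow> (\<integral>\<^sup>+u. g u \<partial>SD x) = ennreal (1/2) * g x + ennreal (1/2) * g (-x)"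
  unfolding SD_def
  by (subst nn_integral_distr) (auto simp: nn_integral_measure_pmf nn_integral_count_space_finite UNIV_bool)

lemma sdelta_SD: "sdelta x = SD x"
  unfolding sdelta_def
proof (rule measure_of_borel_eq)
  fix A :: "real set" assume A: "A \<in> sets borel"
  show "ennreal (1/2) * indicator A x + ennreal (1/2) * indicator A (- x) = emeasure (SD x) A"
    using A nn_SD[of "indicator A" x] by (simp add: nn_integral_indicator[symmetric] SD_def del: nn_integral_indicator)
qed (simp add: SD_def)

lemma sets_spareto[simp]: "sets (spareto \<alpha>) = sets borel"
  by (simp add: spareto_def)

lemma nn_spareto:
  assumes g: "g \<in> borel_measurable borel"
  shows "(\<integral>\<^sup>+u. g u \<partial>spareto \<alpha>) =
    (\<integral>\<^sup>+u. ennreal (\<alpha> * u powr (-2*\<alpha>-1)) * indicator {1..} u * (g u + g (-u)) \<partial>lborel)"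
proof -
  let ?h = "\<lambda>u. ennreal (\<alpha> * \<bar>u\<bar> powr (- 2 * \<alpha> - 1))"
  have "(\<integral>\<^sup>+u. g u \<partial>spareto \<alpha>) = (\<integral>\<^sup>+u. ennreal (\<alpha> * \<bar>u\<bar> powr (- 2 * \<alpha> - 1) * indicator {y. \<bar>y\<bar> \<ge> 1} u) * g u \<partial>lborel)"
    unfolding spareto_def using g by (subst nn_integral_density) auto
  also have "\<dots> = (\<integral>\<^sup>+u. ?h u * indicator {1..} u * g u + ?h u * indicator {..-1} u * g u \<partial>lborel)"
    by (intro nn_integral_cong) (auto simp: indicator_def)
  also have "\<dots> = (\<integral>\<^sup>+u. ?h u * indicator {1..} u * g u \<partial>lborel) + (\<integral>\<^sup>+u. ?h u * indicator {..-1} u * g u \<partial>lborel)"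
    using g by (intro nn_integral_add) auto
  also have "(\<integral>\<^sup>+u. ?h u * indicator {..-1} u * g u \<partial>lborel) = (\<integral>\<^sup>+u. ?h u * indicator {..-1} u * g u \<partial>distr lborel borel uminus)"
    by (simp add: lborel_distr_uminus)
  also have "\<dots> = (\<integral>\<^sup>+u. ?h (-u) * indicator {..-1} (-u) * g (-u) \<partial>lborel)"
    using g by (subst nn_integral_distr) auto
  also have "(\<integral>\<^sup>+u. ?h u * indicator {1..} u * g u \<partial>lborel) + (\<integral>\<^sup>+u. ?h (-u) * indicator {..-1} (-u) * g (-u) \<partial>lborel)
     = (\<integral>\<^sup>+u. ?h u * indicator {1..} u * g u + ?h (-u) * indicator {..-1} (-u) * g (-u) \<partial>lborel)"
    using g by (intro nn_integral_add[symmetric]) auto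
  also have "\<dots> = (\<integral>\<^sup>+u. ennreal (\<alpha> * u powr (-2*\<alpha>-1)) * indicator {1..} u * (g u + g (-u)) \<partial>lborel)"
    by (intro nn_integral_cong) (auto simp: indicator_def distrib_left)
  finally show ?thesis .
qed

definition Jf :: "real \<Rightarrow> real \<Rightarrow> real \<Rightarrow> real" where
  "Jf \<alpha> K b = (if 1 \<le> b then (1 - b powr (-2*\<alpha>))/2 - K*(1 - b powr (-\<alpha>)) else 0)"

lemma J_integral:
  assumes a: "\<alpha> > 0" and K: "0 \<le> K" and Kb: "1 \<le> b \<Longrightarrow> K * b powr \<alpha> \<le> 1"
  shows "(\<integral>\<^sup>+u. ennreal (\<alpha> * u powr (-2*\<alpha>-1)) * indicator {1..} u * ennreal (indicator {..b} u * (1 - K * u powr \<alpha>)) \<partial>lborel)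
     = ennreal (Jf \<alpha> K b)"
proof (cases "1 \<le> b")
  case False
  have z: "(\<lambda>u. ennreal (\<alpha> * u powr (-2*\<alpha>-1)) * indicator {1..} u * ennreal (indicator {..b} u * (1 - K * u powr \<alpha>))) = (\<lambda>u. 0)"
    by (rule ext) (use False in \<open>auto simp: indicator_def\<close>)
  show ?thesis using False by (simp only: z) (simp add: Jf_def)
next
  case True
  define F' where "F' u = \<alpha> * u powr (-2*\<alpha>-1) * (1 - K * u powr \<alpha>)" for u
  define F where "F u = - (u powr (-2*\<alpha>)) / 2 + K * u powr (-\<alpha>)" for u
  have "(\<integral>\<^sup>+u. ennreal (\<alpha> * u powr (-2*\<alpha>-1)) * indicator {1..} u * ennreal (indicator {..b} u * (1 - K * u powr \<alpha>)) \<partial>lborel)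
     = (\<integral>\<^sup>+u. ennreal (F' u) * indicator {1..b} u \<partial>lborel)"
    using a by (intro nn_integral_cong) (auto simp: indicator_def F'_def ennreal_mult')
  also have "\<dots> = ennreal (F b - F 1)"
  proof (rule nn_integral_has_integral_lebesgue')
    fix x assume x: "x \<in> {1..b}"
    have "K * x powr \<alpha> \<le> K * b powr \<alpha>" using x K a by (intro mult_left_mono powr_mono2) auto
    then show "0 \<le> F' x" using Kb[OF True] x a by (auto simp: F'_def)
  next
    show "(F' has_integral F b - F 1) {1..b}"
    proof (rule fundamental_theorem_of_calculus)
      fix x assume x: "x \<in> {1..b}"
      then have x0: "x > 0" by auto
      have "(F has_real_derivative (- ((-2*\<alpha>) * x powr (-2*\<alpha> - 1)) / 2 + K * ((-\<alpha>) * x powr (-\<alpha> - 1)))) (at x)"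
        unfolding F_def by (intro derivative_eq_intros has_real_derivative_powr x0) auto
      moreover have "- ((-2*\<alpha>) * x powr (-2*\<alpha> - 1)) / 2 + K * ((-\<alpha>) * x powr (-\<alpha> - 1)) = F' x"
      proof -
        have "x powr (-\<alpha> - 1) = x powr (-2*\<alpha> - 1) * x powr \<alpha>"
          using x0 by (simp add: powr_add[symmetric])
        then show ?thesis by (simp add: F'_def algebra_simps)
      qed
      ultimately show "(F has_vector_derivative F' x) (at x within {1..b})"
        by (simp add: has_real_derivative_iff_has_vector_derivative[symmetric] has_field_derivative_at_within)
    qed (use True in auto)
  qed
  also have "F b - F 1 = Jf \<alpha> K b" using True by (simp add: F_def Jf_def field_simps)
  finally show ?thesis .
qed

lemma spareto_total: assumes a: "\<alpha> > 0" shows "emeasure (spareto \<alpha>) UNIV = 1"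
proof -
  have sp: "space (spareto \<alpha>) = UNIV" by (simp add: spareto_def)
  have "emeasure (spareto \<alpha>) UNIV = (\<integral>\<^sup>+u. 1 \<partial>spareto \<alpha>)" by (simp add: sp)
  also have "\<dots> = (\<integral>\<^sup>+u. ennreal (\<alpha> * u powr (-2*\<alpha>-1)) * indicator {1..} u * (1 + 1) \<partial>lborel)"
    by (rule nn_spareto) simp
  also have "\<dots> = (\<integral>\<^sup>+u. ennreal (2 * \<alpha> * u powr (-2*\<alpha>-1)) * indicator {1..} u \<partial>lborel)"
    using a by (intro nn_integral_cong) (auto simp: indicator_def ennreal_mult mult_ac)
  also have "\<dots> = 0 - (- (1 powr (-2*\<alpha>)))"
  proof (rule nn_integral_FTC_atLeast)
    show "((\<lambda>x. - (x powr (-2*\<alpha>))) \<longlongrightarrow> 0) at_top"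
      using tendsto_minus[OF tendsto_neg_powr[OF _ filterlim_ident, of "-2*\<alpha>"]] a by simp
    fix x :: real assume x: "1 \<le> x"
    show "0 \<le> 2 * \<alpha> * x powr (-2*\<alpha>-1)" using a by simp
    show "((\<lambda>x. - (x powr (-2*\<alpha>))) has_real_derivative 2 * \<alpha> * x powr (-2*\<alpha>-1)) (at x)"
      using x by (auto intro!: derivative_eq_intros)
  qed simp
  finally show ?thesis by simp
qed
lemma sets_SD[simp]: "sets (SD x) = sets borel" by (simp add: SD_def)
lemma space_SD[simp]: "space (SD x) = UNIV" by (simp add: SD_def)
lemma prob_SD: "prob_space (SD x)" unfolding SD_def by (rule prob_space.prob_space_distr) (auto simp: measure_pmf.prob_space_axioms)
lemma space_spareto[simp]: "space (spareto \<alpha>) = UNIV" by (simp add: spareto_def)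
lemma prob_spareto: "\<alpha> > 0 \<Longrightarrow> prob_space (spareto \<alpha>)"
  by (rule prob_spaceI) (simp add: spareto_total)
lemma SD_total[simp]: "emeasure (SD x) UNIV = 1"
  using prob_space.emeasure_space_1[OF prob_SD, of x] by simp

lemma powr_01: "0 \<le> (r::real) \<Longrightarrow> r \<le> 1 \<Longrightarrow> \<alpha> > 0 \<Longrightarrow> 0 \<le> r powr \<alpha> \<and> r powr \<alpha> \<le> 1"
  using powr_mono2[of \<alpha> r 1] by simp

definition KM :: "real \<Rightarrow> bool \<Rightarrow> real measure" where
  "KM \<alpha> b = (if b then spareto \<alpha> else SD 1)"

lemma KM_meas: "\<alpha> > 0 \<Longrightarrow> KM \<alpha> \<in> measurable (measure_pmf p) (subprob_algebra borel)"
  by (auto simp: KM_def space_subprob_algebra prob_SD prob_spareto prob_space_imp_subprob_space)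

lemma kmix_bind:
  assumes "\<alpha> > 0" "0 \<le> r" "r \<le> 1"
  shows "kmix \<alpha> r = measure_pmf (bernoulli_pmf (r powr \<alpha>)) \<bind> KM \<alpha>"
  unfolding kmix_def
proof (rule measure_of_borel_eq)
  show "sets (measure_pmf (bernoulli_pmf (r powr \<alpha>)) \<bind> KM \<alpha>) = sets borel"
    using KM_meas[OF assms(1)] by (subst sets_bind_measurable) auto
next
  fix A :: "real set" assume A: "A \<in> sets borel"
  have p: "0 \<le> r powr \<alpha>" "r powr \<alpha> \<le> 1" using powr_01[OF assms(2,3,1)] by auto
  show "ennreal (r powr \<alpha>) * emeasure (spareto \<alpha>) A + ennreal (1 - r powr \<alpha>) * emeasure (sdelta 1) A =
    emeasure (measure_pmf (bernoulli_pmf (r powr \<alpha>)) \<bind> KM \<alpha>) A"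
    using A p by (subst emeasure_bind[OF _ KM_meas[OF assms(1)]])
      (auto simp: nn_integral_measure_pmf nn_integral_count_space_finite UNIV_bool KM_def sdelta_SD)
qed

lemma nn_kmix:
  assumes "\<alpha> > 0" "0 \<le> r" "r \<le> 1" and g: "g \<in> borel_measurable borel"
  shows "(\<integral>\<^sup>+u. g u \<partial>kmix \<alpha> r) = ennreal (r powr \<alpha>) * (\<integral>\<^sup>+u. g u \<partial>spareto \<alpha>) + ennreal (1 - r powr \<alpha>) * (\<integral>\<^sup>+u. g u \<partial>SD 1)"
proof -
  have p: "0 \<le> r powr \<alpha>" "r powr \<alpha> \<le> 1" using powr_01[OF assms(2,3,1)] by auto
  show ?thesis
    unfolding kmix_bind[OF assms(1-3)]
    using p g by (subst nn_integral_bind[OF g KM_meas[OF assms(1)]])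
      (auto simp: nn_integral_measure_pmf nn_integral_count_space_finite UNIV_bool KM_def)
qed

lemma sets_kmix[simp]: "sets (kmix \<alpha> r) = sets borel" by (simp add: kmix_def sets.sigma_sets_eq[of borel, simplified])
lemma space_kmix[simp]: "space (kmix \<alpha> r) = UNIV" by (simp add: kmix_def)

lemma kmix_prob: assumes "\<alpha> > 0" "0 \<le> r" "r \<le> 1" shows "prob_space (kmix \<alpha> r)"
proof (rule prob_spaceI)
  have p: "0 \<le> r powr \<alpha>" "r powr \<alpha> \<le> 1" using powr_01[OF assms(2,3,1)] by auto
  have "emeasure (kmix \<alpha> r) UNIV = (\<integral>\<^sup>+u. 1 \<partial>kmix \<alpha> r)" by simp
  also have "\<dots> = ennreal (r powr \<alpha>) + ennreal (1 - r powr \<alpha>)"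
    using p assms spareto_total[OF assms(1)]
    by (subst nn_kmix) auto
  also have "\<dots> = 1" using p by (subst ennreal_plus[symmetric]) auto
  finally show "emeasure (kmix \<alpha> r) (space (kmix \<alpha> r)) = 1" by simp
qed
definition mxf :: "real \<Rightarrow> real \<Rightarrow> real" where "mxf y z = max (abs y) (abs z)"
definition rhof :: "real \<Rightarrow> real \<Rightarrow> real" where
  "rhof y z = (if mxf y z = 0 then 0 else min (abs y) (abs z) / mxf y z)"

lemma kdd_eq: "kdd \<alpha> y z = (if mxf y z = 0 then return borel 0
   else distr (kmix \<alpha> (rhof y z)) borel (\<lambda>u. mxf y z * u))"
  unfolding kdd_def dil_def Let_def mxf_def rhof_def by (auto simp: max_def split: if_splits)

lemma sets_kdd[simp]: "sets (kdd \<alpha> y z) = sets borel" by (simp add: kdd_eq)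

lemma rho01: "0 \<le> rhof y z \<and> rhof y z \<le> 1"
  by (auto simp: divide_le_eq_1 rhof_def mxf_def)

lemma mxf_nonneg: "0 \<le> mxf y z" by (simp add: mxf_def)

lemma meas_kmix: "(\<lambda>u. c * u) \<in> borel_measurable (kmix \<alpha> r)"
  by (subst measurable_cong_sets[where M'=borel and N'=borel]) auto

lemma prob_kdd: "\<alpha> > 0 \<Longrightarrow> prob_space (kdd \<alpha> y z)"
  unfolding kdd_eq using rho01[of y z]
  by (auto intro!: prob_space_return prob_space.prob_space_distr kmix_prob meas_kmix)

lemma nn_kdd:
  assumes a: "\<alpha> > 0" and g: "g \<in> borel_measurable borel"
  shows "(\<integral>\<^sup>+u. g u \<partial>kdd \<alpha> y z) = (if mxf y z = 0 then g 0 else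
     ennreal (rhof y z powr \<alpha>) * (\<integral>\<^sup>+u. g (mxf y z * u) \<partial>spareto \<alpha>)
     + ennreal (1 - rhof y z powr \<alpha>) *
        (ennreal (1/2) * g (mxf y z) + ennreal (1/2) * g (- mxf y z)))"
proof (cases "mxf y z = 0")
  case True
  then show ?thesis unfolding kdd_eq using g by (simp add: nn_integral_return)
next
  case False
  have m: "(\<lambda>u. mxf y z * u) \<in> borel_measurable (kmix \<alpha> (rhof y z))"
    by (subst measurable_cong_sets[where M'=borel and N'=borel]) auto
  have g': "g \<in> borel_measurable (distr (kmix \<alpha> (rhof y z)) borel (\<lambda>u. mxf y z * u))"
    using g by simp
  show ?thesis unfolding kdd_eq using False g rho01[of y z] a
    by (simp add: nn_integral_distr[OF m g'] nn_kmix nn_SD)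
qed

lemma emeasure_kdd_meas:
  assumes a: "\<alpha> > 0" and A: "A \<in> sets borel"
  shows "(\<lambda>z. emeasure (kdd \<alpha> y z) A) \<in> borel_measurable borel"
proof -
  have "(\<lambda>z. emeasure (kdd \<alpha> y z) A) = (\<lambda>z. (if mxf y z = 0 then indicator A 0 else
     ennreal (rhof y z powr \<alpha>) *
       (\<integral>\<^sup>+u. ennreal (\<alpha> * u powr (-2*\<alpha>-1)) * indicator {1..} u *
           (indicator A (mxf y z * u) + indicator A (mxf y z * (-u))) \<partial>lborel)
     + ennreal (1 - rhof y z powr \<alpha>) *
        (ennreal (1/2) * indicator A (mxf y z) + ennreal (1/2) * indicator A (- mxf y z))))"
    (is "_ = ?R")
  proof
    fix z
    have "emeasure (kdd \<alpha> y z) A = (\<integral>\<^sup>+u. indicator A u \<partial>kdd \<alpha> y z)"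
      using A by simp
    also have "\<dots> = ?R z"
      using A a by (subst nn_kdd) (auto simp: nn_spareto)
    finally show "emeasure (kdd \<alpha> y z) A = ?R z" .
  qed
  also have "\<dots> \<in> borel_measurable borel"
    using A unfolding mxf_def rhof_def by measurable
  finally show ?thesis .
qed
definition fA :: "real \<Rightarrow> real \<Rightarrow> real \<Rightarrow> real \<Rightarrow> real" where
  "fA \<alpha> a t u = indicator {..a} u * Psi \<alpha> (u / t)"

lemma Psi_nonneg: "0 \<le> Psi \<alpha> s" by (simp add: Psi_def)
lemma Psi_le1: "\<alpha> > 0 \<Longrightarrow> Psi \<alpha> s \<le> 1" by (simp add: Psi_def)
lemma fA_nonneg: "0 \<le> fA \<alpha> a t u" by (simp add: fA_def Psi_nonneg)

lemma fA_meas[measurable]: "fA \<alpha> a t \<in> borel_measurable borel"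
  unfolding fA_def Psi_def by measurable

lemma fA_pos:
  assumes a: "\<alpha> > 0" "0 < a" "a \<le> t" and M: "M > 0" and u: "1 \<le> u"
  shows "fA \<alpha> a t (M * u) = indicator {..a/M} u * (1 - (M/t) powr \<alpha> * u powr \<alpha>)"
    and "fA \<alpha> a t (M * (-u)) = indicator {..t/M} u * (1 - (M/t) powr \<alpha> * u powr \<alpha>)"
proof -
  have t: "t > 0" using a by linarith
  have e: "\<bar>M * u / t\<bar> powr \<alpha> = (M/t) powr \<alpha> * u powr \<alpha>" "\<bar>M * (-u) / t\<bar> powr \<alpha> = (M/t) powr \<alpha> * u powr \<alpha>"
    using M u t by (auto simp: powr_mult[symmetric] abs_mult field_simps)
  have iff1: "M * u \<le> a \<longleftrightarrow> u \<le> a / M" using M by (simp add: field_simps)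
  have iff2: "M * u / t \<le> 1 \<longleftrightarrow> u \<le> t / M" using M t by (simp add: field_simps)
  have le1: "(M * u / t) powr \<alpha> \<le> 1 \<longleftrightarrow> M * u / t \<le> 1"
  proof
    assume h: "(M * u / t) powr \<alpha> \<le> 1"
    show "M * u / t \<le> 1"
    proof (rule ccontr)
      assume "\<not> M * u / t \<le> 1"
      then have "1 powr \<alpha> < (M * u / t) powr \<alpha>" using a by (intro powr_less_mono2) auto
      then show False using h by simp
    qed
  next
    assume "M * u / t \<le> 1"
    then have "(M * u / t) powr \<alpha> \<le> 1 powr \<alpha>" using a M u t by (intro powr_mono2) auto
    then show "(M * u / t) powr \<alpha> \<le> 1" by simp
  qed
  show "fA \<alpha> a t (M * u) = indicator {..a/M} u * (1 - (M/t) powr \<alpha> * u powr \<alpha>)"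
  proof (cases "u \<le> a / M")
    case True
    then have "M * u \<le> t" using iff1 a by linarith
    then have "M * u / t \<le> 1" using t by simp
    then show ?thesis using True iff1 e(1) le1 M u t by (auto simp: fA_def Psi_def indicator_def abs_mult)
  next
    case False
    then show ?thesis using iff1 by (auto simp: fA_def indicator_def)
  qed
  show "fA \<alpha> a t (M * (-u)) = indicator {..t/M} u * (1 - (M/t) powr \<alpha> * u powr \<alpha>)"
  proof -
    have "0 \<le> M * u" using M u by simp
    then have n: "M * (-u) \<le> a" using a by simp
    have "Psi \<alpha> (M * (-u) / t) = indicator {..t/M} u * (1 - (M/t) powr \<alpha> * u powr \<alpha>)"
    proof (cases "u \<le> t / M")
      case True
      then show ?thesis using iff2 le1 e(1) M u t by (auto simp: Psi_def indicator_def abs_mult)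
    next
      case False
      then have "(M * u / t) powr \<alpha> \<ge> 1" using iff2 le1 by linarith
      then show ?thesis using False e M u t by (auto simp: Psi_def indicator_def abs_mult)
    qed
    then show ?thesis using n by (simp add: fA_def)
  qed
qed
lemma J_nonneg:
  assumes a: "\<alpha> > 0" and K: "0 \<le> K" and Kb: "1 \<le> b \<Longrightarrow> K * b powr \<alpha> \<le> 1"
  shows "0 \<le> Jf \<alpha> K b"
proof (cases "1 \<le> b")
  case True
  define q where "q = b powr (-\<alpha>)"
  have b0: "b > 0" using True by simp
  have q2: "b powr (-2*\<alpha>) = q^2" unfolding q_def power2_eq_square
    by (simp add: powr_add[symmetric])
  have qinv: "q * b powr \<alpha> = 1" unfolding q_def using b0 by (simp add: powr_add[symmetric])
  have bp: "b powr \<alpha> \<ge> 1" using True a by (simp add: ge_one_powr_ge_zero)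
  have q0: "0 < q" unfolding q_def using b0 by simp
  have Kq: "K \<le> q"
  proof -
    have "K * b powr \<alpha> \<le> q * b powr \<alpha>" using Kb[OF True] qinv by simp
    then show ?thesis using bp b0 by (auto simp: mult_le_cancel_right)
  qed
  have qe: "q = 1 / b powr \<alpha>" using qinv bp b0 by (simp add: eq_divide_eq)
  have q1: "q \<le> 1" unfolding qe using bp by (simp add: divide_le_eq_1)
  have "K * (1 - q) \<le> q * (1 - q)" using Kq q1 by (intro mult_right_mono) auto
  moreover have "(1 - q^2)/2 - q*(1-q) = (1-q)^2/2" by (simp add: power2_eq_square field_simps)
  moreover have "0 \<le> (1-q)^2/2" by simp
  ultimately have "0 \<le> (1 - q^2)/2 - K * (1 - q)" by linarith
  then show ?thesis using True unfolding Jf_def q2 q_def[symmetric] by simp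
qed (simp add: Jf_def)

lemma Kbounds:
  fixes \<alpha> a t M :: real
  assumes a: "\<alpha> > 0" "0 < a" "a \<le> t" and M: "M > 0"
  shows "(M/t) powr \<alpha> * (a/M) powr \<alpha> \<le> 1" "(M/t) powr \<alpha> * (t/M) powr \<alpha> \<le> 1"
proof -
  have t: "t > 0" using a by linarith
  have "(M/t) powr \<alpha> * (a/M) powr \<alpha> = (a/t) powr \<alpha>" using M t a
    by (simp add: powr_mult[symmetric])
  also have "\<dots> \<le> 1 powr \<alpha>" using a t by (intro powr_mono2) auto
  finally show "(M/t) powr \<alpha> * (a/M) powr \<alpha> \<le> 1" by simp
  have "(M/t) powr \<alpha> * (t/M) powr \<alpha> = (1::real) powr \<alpha>" using M t
    by (simp add: powr_mult[symmetric])
  then show "(M/t) powr \<alpha> * (t/M) powr \<alpha> \<le> 1" by simp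
qed

lemma Jsum_nonneg:
  fixes \<alpha> a t M :: real
  assumes a: "\<alpha> > 0" "0 < a" "a \<le> t" and M: "M > 0"
  shows "0 \<le> Jf \<alpha> ((M/t) powr \<alpha>) (a/M) + Jf \<alpha> ((M/t) powr \<alpha>) (t/M)"
  using J_nonneg[OF a(1), of "(M/t) powr \<alpha>" "a/M"] J_nonneg[OF a(1), of "(M/t) powr \<alpha>" "t/M"] Kbounds[OF a M]
  by simp

lemma sp_int:
  fixes \<alpha> a t M :: real
  assumes a: "\<alpha> > 0" "0 < a" "a \<le> t" and M: "M > 0"
  shows "(\<integral>\<^sup>+u. ennreal (fA \<alpha> a t (M * u)) \<partial>spareto \<alpha>)
     = ennreal (Jf \<alpha> ((M/t) powr \<alpha>) (a/M) + Jf \<alpha> ((M/t) powr \<alpha>) (t/M))"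
proof -
  define K where "K = (M/t) powr \<alpha>"
  have K0: "0 \<le> K" unfolding K_def by simp
  have Kb1: "K * (a/M) powr \<alpha> \<le> 1" and Kb2: "K * (t/M) powr \<alpha> \<le> 1" using Kbounds[OF a M] unfolding K_def by auto
  let ?h = "\<lambda>u. ennreal (\<alpha> * u powr (-2*\<alpha>-1)) * indicator {1..} u"
  have "(\<integral>\<^sup>+u. ennreal (fA \<alpha> a t (M * u)) \<partial>spareto \<alpha>)
     = (\<integral>\<^sup>+u. ?h u * (ennreal (fA \<alpha> a t (M * u)) + ennreal (fA \<alpha> a t (M * (-u)))) \<partial>lborel)"
    by (rule nn_spareto) simp
  also have "\<dots> = (\<integral>\<^sup>+u. ?h u * ennreal (indicator {..a/M} u * (1 - K * u powr \<alpha>))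
                      + ?h u * ennreal (indicator {..t/M} u * (1 - K * u powr \<alpha>)) \<partial>lborel)"
  proof (rule nn_integral_cong)
    fix u :: real
    show "?h u * (ennreal (fA \<alpha> a t (M * u)) + ennreal (fA \<alpha> a t (M * (-u)))) =
      ?h u * ennreal (indicator {..a/M} u * (1 - K * u powr \<alpha>)) + ?h u * ennreal (indicator {..t/M} u * (1 - K * u powr \<alpha>))"
    proof (cases "1 \<le> u")
      case True
      show ?thesis using fA_pos[OF a M True] unfolding K_def by (simp add: distrib_left)
    qed simp
  qed
  also have "\<dots> = (\<integral>\<^sup>+u. ?h u * ennreal (indicator {..a/M} u * (1 - K * u powr \<alpha>)) \<partial>lborel)
                 + (\<integral>\<^sup>+u. ?h u * ennreal (indicator {..t/M} u * (1 - K * u powr \<alpha>)) \<partial>lborel)"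
    by (rule nn_integral_add) auto
  also have "\<dots> = ennreal (Jf \<alpha> K (a/M)) + ennreal (Jf \<alpha> K (t/M))"
    using J_integral[OF a(1) K0, of "a/M"] J_integral[OF a(1) K0, of "t/M"] Kb1 Kb2 by simp
  also have "\<dots> = ennreal (Jf \<alpha> K (a/M) + Jf \<alpha> K (t/M))"
    using J_nonneg[OF a(1) K0, of "a/M"] J_nonneg[OF a(1) K0, of "t/M"] Kb1 Kb2 by (simp add: ennreal_plus)
  finally show ?thesis unfolding K_def .
qed

lemma ennreal_comb:
  fixes p J h1 h2 :: real
  assumes "0 \<le> p" "p \<le> 1" "0 \<le> J" "0 \<le> h1" "0 \<le> h2"
  shows "ennreal p * ennreal J + ennreal (1 - p) * (ennreal h1 + ennreal h2) = ennreal (p * J + (1 - p) * (h1 + h2))"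
proof -
  have "ennreal (p * J + (1 - p) * (h1 + h2)) = ennreal (p * J) + ennreal ((1 - p) * (h1 + h2))"
    using assms by (intro ennreal_plus) auto
  also have "\<dots> = ennreal p * ennreal J + ennreal (1 - p) * ennreal (h1 + h2)"
    using assms by (simp add: ennreal_mult)
  also have "ennreal (h1 + h2) = ennreal h1 + ennreal h2" using assms by (intro ennreal_plus) auto
  finally show ?thesis by simp
qed

definition phiz :: "real \<Rightarrow> real \<Rightarrow> real \<Rightarrow> real \<Rightarrow> real \<Rightarrow> real" where
  "phiz \<alpha> a t y z = (if mxf y z = 0 then 1 else
     rhof y z powr \<alpha> * (Jf \<alpha> ((mxf y z / t) powr \<alpha>) (a / mxf y z) + Jf \<alpha> ((mxf y z / t) powr \<alpha>) (t / mxf y z))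
     + (1 - rhof y z powr \<alpha>) * (1/2 * fA \<alpha> a t (mxf y z) + 1/2 * fA \<alpha> a t (- mxf y z)))"

lemma nn_f_kdd:
  assumes a: "\<alpha> > 0" "0 < a" "a \<le> t"
  shows "(\<integral>\<^sup>+u. ennreal (fA \<alpha> a t u) \<partial>kdd \<alpha> y z) = ennreal (phiz \<alpha> a t y z)"
proof (cases "mxf y z = 0")
  case True
  then show ?thesis using a by (subst nn_kdd) (auto simp: phiz_def fA_def Psi_def)
next
  case False
  then have M: "mxf y z > 0" using mxf_nonneg[of y z] by linarith
  have p: "0 \<le> rhof y z powr \<alpha>" "rhof y z powr \<alpha> \<le> 1" using powr_01[of "rhof y z" \<alpha>] rho01[of y z] a by auto
  define J where "J = Jf \<alpha> ((mxf y z / t) powr \<alpha>) (a / mxf y z) + Jf \<alpha> ((mxf y z / t) powr \<alpha>) (t / mxf y z)"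
  have J0: "0 \<le> J" unfolding J_def by (rule Jsum_nonneg[OF a M])
  define p where "p = rhof y z powr \<alpha>"
  define f1 where "f1 = fA \<alpha> a t (mxf y z)"
  define f2 where "f2 = fA \<alpha> a t (- mxf y z)"
  have f0: "0 \<le> f1" "0 \<le> f2" unfolding f1_def f2_def by (auto simp: fA_nonneg)
  have h1: "ennreal (1/2) * ennreal f1 = ennreal (1/2 * f1)" by (rule ennreal_mult[symmetric]) (use f0 in auto)
  have h2: "ennreal (1/2) * ennreal f2 = ennreal (1/2 * f2)" by (rule ennreal_mult[symmetric]) (use f0 in auto)
  have "(\<integral>\<^sup>+u. ennreal (fA \<alpha> a t u) \<partial>kdd \<alpha> y z) =
     ennreal p * ennreal J + ennreal (1 - p) * (ennreal (1/2) * ennreal f1 + ennreal (1/2) * ennreal f2)"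
    using False a by (subst nn_kdd) (auto simp: sp_int[OF a M] J_def p_def f1_def f2_def)
  also have "\<dots> = ennreal p * ennreal J + ennreal (1 - p) * (ennreal (1/2 * f1) + ennreal (1/2 * f2))"
    by (simp only: h1 h2)
  also have "\<dots> = ennreal (p * J + (1 - p) * (1/2 * f1 + 1/2 * f2))"
    using p J0 f0 unfolding p_def[symmetric] by (intro ennreal_comb) auto
  also have "\<dots> = ennreal (phiz \<alpha> a t y z)" using False by (simp add: phiz_def p_def J_def f1_def f2_def)
  finally show ?thesis .
qed
lemma alg_identity:
  fixes P S A T :: real
  assumes P: "0 \<le> P" and S: "0 \<le> S" and A: "0 < A" and AT: "A \<le> T"
    and PA: "P \<noteq> A" and SA: "S \<noteq> A" and ST: "S \<noteq> T"
  shows "(if max P S = 0 then 1 else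
      (min P S / max P S) * ((if max P S \<le> A then (1 - (max P S / A)^2)/2 - (max P S / T)*(1 - max P S / A) else 0)
                         + (if max P S \<le> T then (1 - (max P S / T)^2)/2 - (max P S / T)*(1 - max P S / T) else 0))
      + (1 - min P S / max P S) * (1/2 * (if max P S \<le> A then 1 else 0) * max 0 (1 - max P S / T) + 1/2 * max 0 (1 - max P S / T)))
    = 1/2 * max 0 (1 - P/A) * (((if S \<le> A then 1 else 0) - max 0 (1 - S/A)) * (1 - A/T) + (A/T) * max 0 (1 - S/A))
      + 1/2 * max 0 (1 - S/A) * (1 - A/T) * (if P < A then 1 else 0)
      + 1/2 * max 0 (1 - P/T) * max 0 (1 - S/T)"
proof -
  have T: "0 < T" using A AT by linarith
  consider "P \<le> S" | "S < P" by linarith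
  then show ?thesis
  proof cases
    case 1
    then have mx: "max P S = S" "min P S = P" by auto
    consider "S < A" | "A < S \<and> S < T" | "T < S" using SA ST by linarith
    then show ?thesis
    proof cases
      case 1
      then show ?thesis using \<open>P \<le> S\<close> P A T AT unfolding mx by (auto simp: field_simps power2_eq_square)
    next
      case 2
      then show ?thesis using \<open>P \<le> S\<close> P A T AT PA unfolding mx
        by (cases "P < A") (auto simp: field_simps power2_eq_square max_def)
    next
      case 3
      then show ?thesis using \<open>P \<le> S\<close> P A T AT PA unfolding mx
        by (cases "P < A"; cases "P < T") (auto simp: field_simps power2_eq_square max_def)
    qed
  next
    case 2
    then have mx: "max P S = P" "min P S = S" by auto
    consider "P < A" | "A < P \<and> P \<le> T" | "T < P" using PA by linarith
    then show ?thesis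
    proof cases
      case 1
      then show ?thesis using \<open>S < P\<close> S A T AT unfolding mx by (auto simp: field_simps power2_eq_square)
    next
      case 2
      then show ?thesis using \<open>S < P\<close> S A T AT SA unfolding mx
        by (cases "S < A") (auto simp: field_simps power2_eq_square max_def)
    next
      case 3
      then show ?thesis using \<open>S < P\<close> S A T AT SA unfolding mx
        by (cases "S < A"; cases "S < T") (auto simp: field_simps power2_eq_square max_def)
    qed
  qed
qed
lemma kdd_abs: "\<bar>x\<bar> = \<bar>y\<bar> \<Longrightarrow> kdd \<alpha> x z = kdd \<alpha> y z"
  by (simp add: kdd_def)

lemma AE_SD_abs: fixes y :: real shows "AE x in SD y. \<bar>x\<bar> = \<bar>y\<bar>"
proof (rule AE_I'[where N="{x::real. \<bar>x\<bar> \<noteq> \<bar>y\<bar>}"])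
  have m: "{x::real. \<bar>x\<bar> \<noteq> \<bar>y\<bar>} \<in> sets borel" by measurable
  have "emeasure (SD y) {x. \<bar>x\<bar> \<noteq> \<bar>y\<bar>} = (\<integral>\<^sup>+u. indicator {x. \<bar>x\<bar> \<noteq> \<bar>y\<bar>} u \<partial>SD y)"
    using m by simp
  also have "\<dots> = 0" using m by (subst nn_SD) auto
  finally show "{x. \<bar>x\<bar> \<noteq> \<bar>y\<bar>} \<in> null_sets (SD y)" using m by auto
qed auto

lemma kdd_kernel:
  assumes a: "\<alpha> > 0" and sN: "sets N = sets borel"
  shows "kdd \<alpha> y \<in> measurable N (subprob_algebra borel)"
proof (rule measurable_subprob_algebra)
  fix A :: "real set" assume A: "A \<in> sets borel"
  show "(\<lambda>z. emeasure (kdd \<alpha> y z) A) \<in> borel_measurable N"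
    using emeasure_kdd_meas[OF a A] by (subst measurable_cong_sets[OF sN refl])
qed (auto simp: prob_kdd[OF a] prob_space_imp_subprob_space)

lemma kconv_bind:
  assumes a: "\<alpha> > 0" and sN: "sets N = sets borel" and pN: "prob_space N"
  shows "kconv \<alpha> (sdelta y) N = N \<bind> kdd \<alpha> y"
  unfolding kconv_def
proof (rule measure_of_borel_eq)
  have ne: "space N \<noteq> {}" using pN prob_space.not_empty by blast
  show "sets (N \<bind> kdd \<alpha> y) = sets borel"
    using kdd_kernel[OF a sN] ne by (subst sets_bind_measurable) auto
  fix A :: "real set" assume A: "A \<in> sets borel"
  have "(\<integral>\<^sup>+x. \<integral>\<^sup>+z. emeasure (kdd \<alpha> x z) A \<partial>N \<partial>sdelta y) = (\<integral>\<^sup>+x. \<integral>\<^sup>+z. emeasure (kdd \<alpha> y z) A \<partial>N \<partial>sdelta y)"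
    unfolding sdelta_SD
  proof (rule nn_integral_cong_AE)
    show "AE x in SD y. (\<integral>\<^sup>+z. emeasure (kdd \<alpha> x z) A \<partial>N) = (\<integral>\<^sup>+z. emeasure (kdd \<alpha> y z) A \<partial>N)"
      using AE_SD_abs[of y]
    proof eventually_elim
      case (elim x)
      then have "kdd \<alpha> x = kdd \<alpha> y" by (intro ext kdd_abs)
      then show ?case by simp
    qed
  qed
  also have "\<dots> = (\<integral>\<^sup>+z. emeasure (kdd \<alpha> y z) A \<partial>N)"
    unfolding sdelta_SD by simp
  also have "\<dots> = emeasure (N \<bind> kdd \<alpha> y) A"
    using kdd_kernel[OF a sN] ne A by (subst emeasure_bind) auto
  finally show "(\<integral>\<^sup>+x. \<integral>\<^sup>+z. emeasure (kdd \<alpha> x z) A \<partial>N \<partial>sdelta y) = emeasure (N \<bind> kdd \<alpha> y) A" .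
qed
lemma alg_identity2:
  fixes P S A T :: real
  assumes P: "0 \<le> P" and S: "0 \<le> S" and A: "0 < A" and AT: "A \<le> T"
    and PA: "P \<noteq> A" and SA: "S \<noteq> A" and ST: "S \<noteq> T"
  shows "(if max P S = 0 then 1 else
      (min P S / max P S) * ((if max P S \<le> A then (1 - (max P S / A)^2)/2 - (max P S / T)*(1 - max P S / A) else 0)
                         + (if max P S \<le> T then (1 - (max P S / T)^2)/2 - (max P S / T)*(1 - max P S / T) else 0))
      + (1 - min P S / max P S) * (1/2 * ((if max P S \<le> A then 1 else 0) * max 0 (1 - max P S / T)) + 1/2 * max 0 (1 - max P S / T)))
    = 1/2 * max 0 (1 - P/A) * (((if S \<le> A then 1 else 0) - max 0 (1 - S/A)) * (1 - A/T) + (1 - (1 - A/T)) * max 0 (1 - S/A))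
      + 1/2 * max 0 (1 - S/A) * (1 - A/T) * (if P < A then 1 else 0)
      + 1/2 * max 0 (1 - P/T) * max 0 (1 - S/T)"
proof -
  have T: "0 < T" using A AT by linarith
  consider "P \<le> S" | "S < P" by linarith
  then show ?thesis
  proof cases
    case 1
    then have mx: "max P S = S" "min P S = P" by auto
    consider "S < A" | "A < S \<and> S < T" | "T < S" using SA ST by linarith
    then show ?thesis
    proof cases
      case 1
      then show ?thesis using \<open>P \<le> S\<close> P A T AT unfolding mx by (auto simp: field_simps power2_eq_square)
    next
      case 2
      then show ?thesis using \<open>P \<le> S\<close> P A T AT PA unfolding mx
        by (cases "P < A") (auto simp: field_simps power2_eq_square max_def)
    next
      case 3
      then show ?thesis using \<open>P \<le> S\<close> P A T AT PA unfolding mx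
        by (cases "P < A"; cases "P < T") (auto simp: field_simps power2_eq_square max_def)
    qed
  next
    case 2
    then have mx: "max P S = P" "min P S = S" by auto
    consider "P < A" | "A < P \<and> P \<le> T" | "T < P" using PA by linarith
    then show ?thesis
    proof cases
      case 1
      then show ?thesis using \<open>S < P\<close> S A T AT unfolding mx by (auto simp: field_simps power2_eq_square)
    next
      case 2
      then show ?thesis using \<open>S < P\<close> S A T AT SA unfolding mx
        by (cases "S < A") (auto simp: field_simps power2_eq_square max_def)
    next
      case 3
      then show ?thesis using \<open>S < P\<close> S A T AT SA unfolding mx
        by (cases "S < A"; cases "S < T") (auto simp: field_simps power2_eq_square max_def)
    qed
  qed
qed
definition psiz :: "real \<Rightarrow> real \<Rightarrow> real \<Rightarrow> real \<Rightarrow> real \<Rightarrow> real" where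
  "psiz \<alpha> a t y z = 1/2 * Psi \<alpha> (y/a) * ((indicator {-a..a} z - Psi \<alpha> (z/a)) * Psi \<alpha> (a/t) + (1 - Psi \<alpha> (a/t)) * Psi \<alpha> (z/a))
     + 1/2 * Psi \<alpha> (z/a) * Psi \<alpha> (a/t) * (if \<bar>y\<bar> < a then 1 else 0) + 1/2 * Psi \<alpha> (y/t) * Psi \<alpha> (z/t)"

lemma powr_le_iff': "0 \<le> u \<Longrightarrow> 0 \<le> v \<Longrightarrow> (\<alpha>::real) > 0 \<Longrightarrow> (u powr \<alpha> \<le> v powr \<alpha>) = (u \<le> (v::real))"
proof
  assume "0 \<le> u" "0 \<le> v" "\<alpha> > 0" "u powr \<alpha> \<le> v powr \<alpha>"
  then show "u \<le> v" using powr_less_mono2[of \<alpha> v u] by (cases "v < u") auto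
qed (auto intro: powr_mono2)

lemma powr_less_iff': "0 \<le> u \<Longrightarrow> 0 \<le> v \<Longrightarrow> (\<alpha>::real) > 0 \<Longrightarrow> (u powr \<alpha> < v powr \<alpha>) = (u < (v::real))"
  using powr_le_iff'[of v u \<alpha>] by (simp add: not_le[symmetric])

lemma Psi_conv: "(\<alpha>::real) > 0 \<Longrightarrow> b > 0 \<Longrightarrow> Psi \<alpha> (x / b) = max 0 (1 - \<bar>x\<bar> powr \<alpha> / b powr \<alpha>)"
  by (simp add: Psi_def abs_divide powr_divide)

lemma phi_psi:
  fixes \<alpha> a t y z :: real
  assumes al: "\<alpha> > 0" and a: "0 < a" and at: "a \<le> t" and ya: "\<bar>y\<bar> \<noteq> a" and za: "\<bar>z\<bar> \<noteq> a" and zt: "\<bar>z\<bar> \<noteq> t"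
  shows "phiz \<alpha> a t y z = psiz \<alpha> a t y z"
proof -
  define c where "c = \<bar>y\<bar>"
  define s where "s = \<bar>z\<bar>"
  define P where "P = c powr \<alpha>"
  define S where "S = s powr \<alpha>"
  define A where "A = a powr \<alpha>"
  define T where "T = t powr \<alpha>"
  have t: "0 < t" using a at by linarith
  have c0: "0 \<le> c" and s0: "0 \<le> s" unfolding c_def s_def by auto
  have P0: "0 \<le> P" and S0: "0 \<le> S" unfolding P_def S_def by auto
  have A0: "0 < A" unfolding A_def using a by simp
  have T0: "0 < T" unfolding T_def using t by simp
  have AT: "A \<le> T" unfolding A_def T_def using a at al by (intro powr_mono2) auto
  have PA: "P \<noteq> A" unfolding P_def A_def using ya c0 a al powr_le_iff'[of c a \<alpha>] powr_le_iff'[of a c \<alpha>]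
    unfolding c_def by (metis antisym order.refl less_imp_le)
  have SA: "S \<noteq> A" unfolding S_def A_def using za s0 a al powr_le_iff'[of s a \<alpha>] powr_le_iff'[of a s \<alpha>]
    unfolding s_def by (metis antisym order.refl less_imp_le)
  have ST: "S \<noteq> T" unfolding S_def T_def using zt s0 t al powr_le_iff'[of s t \<alpha>] powr_le_iff'[of t s \<alpha>]
    unfolding s_def by (metis antisym order.refl less_imp_le)
  have mx: "mxf y z = max c s" unfolding mxf_def c_def s_def ..
  have mxP: "(max c s) powr \<alpha> = max P S" unfolding P_def S_def using c0 s0 al
    by (cases "c \<le> s") (auto simp: max_def powr_le_iff')
  have mnP: "(min c s) powr \<alpha> = min P S" unfolding P_def S_def using c0 s0 al
    by (cases "c \<le> s") (auto simp: min_def powr_le_iff')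
  have LHS: "phiz \<alpha> a t y z = (if max P S = 0 then 1 else
      (min P S / max P S) * ((if max P S \<le> A then (1 - (max P S / A)^2)/2 - (max P S / T)*(1 - max P S / A) else 0)
                         + (if max P S \<le> T then (1 - (max P S / T)^2)/2 - (max P S / T)*(1 - max P S / T) else 0))
      + (1 - min P S / max P S) * (1/2 * ((if max P S \<le> A then 1 else 0) * max 0 (1 - max P S / T)) + 1/2 * max 0 (1 - max P S / T)))"
  proof (cases "max c s = 0")
    case True
    then have "max P S = 0" using mxP by simp
    then show ?thesis using True by (simp add: phiz_def mx)
  next
    case False
    define M where "M = max c s"
    have M0: "M > 0" using False c0 s0 unfolding M_def by linarith
    have X0: "max P S \<noteq> 0" using mxP False M0 unfolding M_def by auto
    have e1: "rhof y z powr \<alpha> = min P S / max P S"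
    proof -
      have mn: "min \<bar>y\<bar> \<bar>z\<bar> = min c s" unfolding c_def s_def ..
      show ?thesis using False unfolding rhof_def mx mn by (simp add: powr_divide mxP mnP)
    qed
    have e2: "(mxf y z / t) powr \<alpha> = max P S / T"
      unfolding mx T_def by (simp add: powr_divide mxP)
    have Jc: "Jf \<alpha> (max P S / T) (b / M) = (if max P S \<le> b powr \<alpha> then (1 - (max P S / b powr \<alpha>)^2)/2 - (max P S / T)*(1 - max P S / b powr \<alpha>) else 0)"
      if b: "b > 0" for b
    proof -
      have i: "(1 \<le> b / M) = (max P S \<le> b powr \<alpha>)"
        using M0 b al powr_le_iff'[of M b \<alpha>] mxP c0 s0 unfolding M_def by (simp add: le_divide_eq_1)
      have p1: "(b / M) powr (-\<alpha>) = max P S / b powr \<alpha>"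
        using M0 b mxP unfolding M_def by (simp add: powr_minus_divide powr_divide)
      have p2: "(b / M) powr (-2*\<alpha>) = ((b / M) powr (-\<alpha>))^2"
        using M0 b by (simp add: power2_eq_square powr_add[symmetric])
      show ?thesis unfolding Jf_def i p2 p1 ..
    qed
    have e3: "Jf \<alpha> (max P S / T) (a / mxf y z) = (if max P S \<le> A then (1 - (max P S / A)^2)/2 - (max P S / T)*(1 - max P S / A) else 0)"
      using Jc[OF a] unfolding A_def mx M_def .
    have e4: "Jf \<alpha> (max P S / T) (t / mxf y z) = (if max P S \<le> T then (1 - (max P S / T)^2)/2 - (max P S / T)*(1 - max P S / T) else 0)"
      using Jc[OF t] unfolding T_def mx M_def .
    have e5: "fA \<alpha> a t (mxf y z) = (if max P S \<le> A then 1 else 0) * max 0 (1 - max P S / T)"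
      unfolding fA_def mx using M0 a al t powr_le_iff'[of M a \<alpha>] mxP
      by (simp add: Psi_conv[OF al t] A_def T_def M_def indicator_def)
    have e6: "fA \<alpha> a t (- mxf y z) = max 0 (1 - max P S / T)"
      unfolding fA_def mx using M0 a al t mxP Psi_conv[OF al t, of "- M"]
      by (simp add: T_def M_def indicator_def)
    show ?thesis unfolding phiz_def e1 e2 e3 e4 e5 e6 using False X0 by (simp add: mx)
  qed
  have RHS: "psiz \<alpha> a t y z = 1/2 * max 0 (1 - P/A) * (((if S \<le> A then 1 else 0) - max 0 (1 - S/A)) * (1 - A/T) + (1 - (1 - A/T)) * max 0 (1 - S/A))
      + 1/2 * max 0 (1 - S/A) * (1 - A/T) * (if P < A then 1 else 0)
      + 1/2 * max 0 (1 - P/T) * max 0 (1 - S/T)"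
  proof -
    have f1: "Psi \<alpha> (y/a) = max 0 (1 - P/A)" unfolding P_def A_def c_def by (rule Psi_conv[OF al a])
    have f2: "Psi \<alpha> (y/t) = max 0 (1 - P/T)" unfolding P_def T_def c_def by (rule Psi_conv[OF al t])
    have f3: "Psi \<alpha> (z/a) = max 0 (1 - S/A)" unfolding S_def A_def s_def by (rule Psi_conv[OF al a])
    have f4: "Psi \<alpha> (z/t) = max 0 (1 - S/T)" unfolding S_def T_def s_def by (rule Psi_conv[OF al t])
    have f5: "Psi \<alpha> (a/t) = 1 - A/T" unfolding A_def T_def using Psi_conv[OF al t, of a] a AT A0 T0
      by (simp add: A_def T_def)
    have f6: "indicator {-a..a} z = (if S \<le> A then 1 else (0::real))"
      unfolding S_def A_def s_def using powr_le_iff'[of "\<bar>z\<bar>" a \<alpha>] a al by (auto simp: indicator_def abs_le_iff)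
    have f7: "(\<bar>y\<bar> < a) = (P < A)" unfolding P_def A_def c_def using powr_less_iff'[of "\<bar>y\<bar>" a \<alpha>] a al by auto
    show ?thesis unfolding psiz_def f1 f2 f3 f4 f5 f6 f7 ..
  qed
  show ?thesis unfolding LHS RHS by (rule alg_identity2[OF P0 S0 A0 AT PA SA ST])
qed
lemma phiz_nonneg:
  assumes a: "\<alpha> > 0" "0 < a" "a \<le> t"
  shows "0 \<le> phiz \<alpha> a t y z"
proof (cases "mxf y z = 0")
  case False
  then have M: "mxf y z > 0" using mxf_nonneg[of y z] by linarith
  have p: "0 \<le> rhof y z powr \<alpha>" "rhof y z powr \<alpha> \<le> 1" using powr_01[of "rhof y z" \<alpha>] rho01[of y z] a by auto
  show ?thesis using False Jsum_nonneg[OF a M] p unfolding phiz_def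
    by (auto intro!: add_nonneg_nonneg mult_nonneg_nonneg fA_nonneg)
qed (simp add: phiz_def)

lemma phiz_meas: "phiz \<alpha> a t y \<in> borel_measurable borel"
  unfolding phiz_def Jf_def fA_def Psi_def mxf_def rhof_def by measurable

lemma psiz_meas: "psiz \<alpha> a t y \<in> borel_measurable borel"
  unfolding psiz_def Psi_def by measurable

lemma sym_measure:
  assumes sN: "sets N = sets borel" and d: "distr N borel uminus = N" and B: "B \<in> sets borel"
  shows "measure N (uminus -` B) = measure N (B::real set)"
proof -
  have sp: "space N = UNIV" using sets_eq_imp_space_eq[OF sN] by simp
  have "measure N B = measure (distr N borel uminus) B" using d by simp
  also have "\<dots> = measure N (uminus -` B \<inter> space N)"
    using B sN by (subst measure_distr) (auto simp: measurable_cong_sets[OF sN refl])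
  finally show ?thesis using sp by simp
qed
theorem mainTheorem4:
  fixes \<alpha> a t y :: real and \<nu> :: "real measure"
  assumes "\<alpha> > 0"
    and "sym_prob \<nu>"
    and "measure \<nu> {0} = 0"
    and "0 < a" and "a \<le> t"
    and "measure \<nu> {a} = 0" and "measure \<nu> {t} = 0"
    and "\<bar>y\<bar> \<noteq> a"
  shows "(\<integral>x. indicator {..a} x * Psi \<alpha> (x / t) \<partial>(kconv \<alpha> (sdelta y) \<nu>))
       = 1/2 * Psi \<alpha> (y / a) * Mf \<alpha> \<nu> a t
         + 1/2 * Gf \<alpha> \<nu> a * Psi \<alpha> (a / t) * (if \<bar>y\<bar> < a then 1 else 0)
         + 1/2 * Psi \<alpha> (y / t) * Gf \<alpha> \<nu> t"
proof -
  note al = assms(1) and a = assms(4) and at = assms(5) and ya = assms(8)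
  have t: "0 < t" using a at by linarith
  have pN: "prob_space \<nu>" and sN: "sets \<nu> = sets borel" and dN: "distr \<nu> borel uminus = \<nu>"
    using assms(2) unfolding sym_prob_def by auto
  interpret prob_space \<nu> by (rule pN)
  have spN: "space \<nu> = UNIV" using sets_eq_imp_space_eq[OF sN] by simp
  have mcong: "\<And>f::real\<Rightarrow>real. (f \<in> borel_measurable \<nu>) = (f \<in> borel_measurable borel)"
    using measurable_cong_sets[OF sN refl, of "borel :: real measure"] by simp
  define K where "K = kconv \<alpha> (sdelta y) \<nu>"
  have K: "K = \<nu> \<bind> kdd \<alpha> y" unfolding K_def by (rule kconv_bind[OF al sN pN])
  have sK: "sets K = sets borel" unfolding K
    using kdd_kernel[OF al sN] not_empty by (subst sets_bind_measurable) auto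
  have f_eq: "(\<lambda>x. indicator {..a} x * Psi \<alpha> (x / t)) = fA \<alpha> a t" by (rule ext) (simp add: fA_def)
  have "(\<integral>x. indicator {..a} x * Psi \<alpha> (x / t) \<partial>K) = enn2real (\<integral>\<^sup>+x. ennreal (fA \<alpha> a t x) \<partial>K)"
    unfolding f_eq by (rule integral_eq_nn_integral) (auto simp: measurable_cong_sets[OF sK refl] fA_nonneg)
  also have "(\<integral>\<^sup>+x. ennreal (fA \<alpha> a t x) \<partial>K) = (\<integral>\<^sup>+z. \<integral>\<^sup>+x. ennreal (fA \<alpha> a t x) \<partial>kdd \<alpha> y z \<partial>\<nu>)"
    unfolding K by (rule nn_integral_bind[OF _ kdd_kernel[OF al sN]]) simp
  also have "\<dots> = (\<integral>\<^sup>+z. ennreal (phiz \<alpha> a t y z) \<partial>\<nu>)"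
    by (simp add: nn_f_kdd[OF al a at])
  also have "enn2real \<dots> = (\<integral>z. phiz \<alpha> a t y z \<partial>\<nu>)"
    by (rule enn2real_nn_integral_eq_integral) (auto simp: phiz_nonneg[OF al a at] mcong phiz_meas)
  also have "\<dots> = (\<integral>z. psiz \<alpha> a t y z \<partial>\<nu>)"
  proof (rule integral_cong_AE)
    show "phiz \<alpha> a t y \<in> borel_measurable \<nu>" "psiz \<alpha> a t y \<in> borel_measurable \<nu>"
      by (auto simp: mcong phiz_meas psiz_meas)
    have null: "AE z in \<nu>. z \<noteq> b" if "measure \<nu> {b} = 0" for b
    proof (rule AE_I'[where N="{b}"])
      show "{b} \<in> null_sets \<nu>" using that sN by (auto simp: emeasure_eq_measure)
    qed auto
    have neg: "measure \<nu> {-b} = measure \<nu> {b}" for b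
    proof -
      have "uminus -` {b} = {-b::real}" by auto
      then show ?thesis using sym_measure[OF sN dN, of "{b}"] by simp
    qed
    have "AE z in \<nu>. z \<noteq> a \<and> z \<noteq> -a \<and> z \<noteq> t \<and> z \<noteq> -t"
      using null[of a] null[of "-a"] null[of t] null[of "-t"] neg[of a] neg[of t] assms(6,7)
      by auto
    then show "AE z in \<nu>. phiz \<alpha> a t y z = psiz \<alpha> a t y z"
    proof eventually_elim
      case (elim z)
      then have "\<bar>z\<bar> \<noteq> a" "\<bar>z\<bar> \<noteq> t" by auto
      then show ?case by (intro phi_psi[OF al a at ya])
    qed
  qed
  also have "\<dots> = 1/2 * Psi \<alpha> (y / a) * Mf \<alpha> \<nu> a t
         + 1/2 * Gf \<alpha> \<nu> a * Psi \<alpha> (a / t) * (if \<bar>y\<bar> < a then 1 else 0)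
         + 1/2 * Psi \<alpha> (y / t) * Gf \<alpha> \<nu> t"
  proof -
    define c1 where "c1 = 1/2 * Psi \<alpha> (y/a) * Psi \<alpha> (a/t)"
    define c2 where "c2 = 1/2 * Psi \<alpha> (y/a) * (1 - 2 * Psi \<alpha> (a/t)) + 1/2 * Psi \<alpha> (a/t) * (if \<bar>y\<bar> < a then 1 else 0)"
    define c3 where "c3 = 1/2 * Psi \<alpha> (y/t)"
    have ps: "psiz \<alpha> a t y z = c1 * indicator {-a..a} z + c2 * Psi \<alpha> (z/a) + c3 * Psi \<alpha> (z/t)" for z
      unfolding psiz_def c1_def c2_def c3_def by (simp add: algebra_simps)
    have iP: "integrable \<nu> (\<lambda>z. Psi \<alpha> (z/b))" for b
    proof (rule integrable_const_bound[where B=1])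
      show "AE x in \<nu>. norm (Psi \<alpha> (x/b)) \<le> 1" using Psi_le1[OF al] Psi_nonneg by auto
      show "(\<lambda>z. Psi \<alpha> (z/b)) \<in> borel_measurable \<nu>" unfolding mcong Psi_def by measurable
    qed
    have iI: "integrable \<nu> (indicator {-a..a} :: real \<Rightarrow> real)"
      using sN by (intro integrable_real_indicator) (auto simp: emeasure_eq_measure)
    have "(\<integral>z. psiz \<alpha> a t y z \<partial>\<nu>) = (\<integral>z. c1 * indicator {-a..a} z + c2 * Psi \<alpha> (z/a) + c3 * Psi \<alpha> (z/t) \<partial>\<nu>)"
      by (simp add: ps)
    also have "\<dots> = c1 * measure \<nu> {-a..a} + c2 * Gf \<alpha> \<nu> a + c3 * Gf \<alpha> \<nu> t"
      using iP[of a] iP[of t] iI sN unfolding Gf_def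
      by (simp add: integral_add integral_mult_right_zero emeasure_eq_measure)
    also have "measure \<nu> {-a..a} = 2 * cdfF \<nu> a - 1"
    proof -
      have u: "{..a} = {..<-a} \<union> {-a..a}" "{..<-a} \<inter> {-a..a} = ({}::real set)" using a by auto
      have m1: "measure \<nu> {..a} = measure \<nu> {..<-a} + measure \<nu> {-a..a}"
        unfolding u(1) using sN u(2) by (intro finite_measure_Union) auto
      have "uminus -` {a<..} = {..<-a::real}" by auto
      then have m2: "measure \<nu> {..<-a} = measure \<nu> {a<..}" using sym_measure[OF sN dN, of "{a<..}"] by simp
      have "space \<nu> - {..a} = {a<..}" using spN by auto
      then have m3: "measure \<nu> {a<..} = 1 - measure \<nu> {..a}" using prob_compl[of "{..a}"] sN by simp
      show ?thesis unfolding cdfF_def using m1 m2 m3 by linarith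
    qed
    finally show ?thesis unfolding Mf_def Hf_def c1_def c2_def c3_def by (cases "\<bar>y\<bar> < a") (simp_all add: field_simps)
  qed
  finally show ?thesis unfolding K_def .
qed

end
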